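(* Let $R$ be a monad on $\mathrm{Sets}$ and $LM$ a left $R$-module with values in $\mathrm{Sets}$. The pre-category $CC(R,LM)$, equipped with the length function, the object $pt$, the map $ft$, the morphisms $p_X$, and the objects $f^*X$ and morphisms $q(f,X)$ described below, is a C-system.
   Context: Notation: $[n]=\{1,\dots,n\}$, $[0]=\emptyset$. A monad $R$ on Sets is given by sets $R(X)$, maps $\eta_X:X\to R(X)$ and, for $f:X\to R(Y)$, maps $\mathrm{bind}(f):R(X)\to R(Y)$ with $\mathrm{bind}(\eta_X)=\mathrm{id}$, $\mathrm{bind}(f)\circ\eta_X=f$, $\mathrm{bind}(\mathrm{bind}(g)\circ f)=\mathrm{bind}(g)\circ\mathrm{bind}(f)$. A left $R$-module $LM$ with values in Sets is a functor $LM:\mathrm{Sets}\to\mathrm{Sets}$ with maps $\rho(f):LM(X)\to LM(Y)$ for $f:X\to R(Y)$ such that $\rho(\eta_X)=\mathrm{id}$ and $\rho(g)\circ\rho(f)=\rho(\mathrm{bind}(g)\circ f)$. Elements $y$ of a set $Y$ are regarded as elements of $R(Y)$ via $\eta_Y$. For $E\in LM([m])$ (resp. $E\in R([m])$) and $f_1,\dots,f_m\in R(Y)$ write $E(f_1/1,\dots,f_m/m)$ for $\rho(f)(E)$ (resp. $\mathrm{bind}(f)(E)$), where $f(i)=f_i$. The pre-category $CC(R,LM)$: its set of objects is $\coprod_{n\ge0}Ob_n$ with $Ob_n=LM([0])\times LM([1])\times\dots\times LM([n-1])$; we write objects as sequences $(T_1,\dots,T_n)$ with $T_i\in LM([i-1])$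 and set $l(T_1,\dots,T_n)=n$. The set of morphisms from $(E_1,\dots,E_m)$ to $(T_1,\dots,T_n)$ is $R([m])^n$ (morphism sets for different pairs of objects are disjoint). The composite of $f=(f_1,\dots,f_n):(E_1,\dots,E_m)\to(T_1,\dots,T_n)$ and $g=(g_1,\dots,g_k):(T_1,\dots,T_n)\to(U_1,\dots,U_k)$ is $g\circ f=(g_1(f_1/1,\dots,f_n/n),\dots,g_k(f_1/1,\dots,f_n/n))$; the identity of an object of length $n$ is $(1,\dots,n)$. Structure: $pt$ is the empty sequence; $ft(T_1,\dots,T_n)=(T_1,\dots,T_{n-1})$ for $n\ge1$, $ft(pt)=pt$; $p_X=(1,\dots,n):(T_1,\dots,T_{n+1})\to(T_1,\dots,T_n)$ for $X=(T_1,\dots,T_{n+1})$ and $p_{pt}=\mathrm{id}$; for $X=(T_1,\dots,T_{n+1})$ and $f=(f_1,\dots,f_n):(R_1,\dots,R_m)\to(T_1,\dots,T_n)$, $f^*X=(R_1,\dots,R_m,T_{n+1}(f_1/1,\dots,f_n/n))$ and $q(f,X)=(f_1,\dots,f_n,m+1):f^*X\to X$. A C-system is a category $CC$ together with a function $l:Ob(CC)\to\mathbb{N}$, an object $pt$, a map $ft:Ob(CC)\to Ob(CC)$, morphisms $p_X:X\to ft(X)$ for all $X$, and, for every $X$ with $l(X)>0$ and every morphism $f:Y\to ft(X)$, an object $f^*X$ and a morphism $q(f,X):f^*X\to X$, such that: $l^{-1}(0)=\{pt\}$; $l(ft(X))=l(X)-1$ if $l(X)>0$ and $ft(pt)=pt$;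 $pt$ is a final object; $l(f^*X)>0$, $ft(f^*X)=Y$, and $p_X\circ q(f,X)=f\circ p_{f^*X}$ with this commutative square a pullback square; $\mathrm{id}_{ft(X)}^*X=X$ and $q(\mathrm{id}_{ft(X)},X)=\mathrm{id}_X$; and for $g:Z\to Y$, $f:Y\to ft(X)$: $(f\circ g)^*X=g^*(f^*X)$ and $q(f\circ g,X)=q(f,X)\circ q(g,f^*X)$. *)

theory Defs
  imports Main
begin

text \<open>Sets are modelled as subsets of a fixed universe (here: sets of natural numbers),
  which contains all the finite ordinals [n] = {1..n}.  A monad on Sets is given in
  Kleisli form: R X, eta X :: X \<rightarrow> R X, bind X Y f :: R X \<rightarrow> R Y for f : X \<rightarrow> R Y.
  Functions are total HOL functions; only their values on the domain set matter
  (congruence conditions).\<close>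

definition monad_sets ::
  "(nat set \<Rightarrow> 'r set) \<Rightarrow> (nat set \<Rightarrow> nat \<Rightarrow> 'r) \<Rightarrow>
   (nat set \<Rightarrow> nat set \<Rightarrow> (nat \<Rightarrow> 'r) \<Rightarrow> 'r \<Rightarrow> 'r) \<Rightarrow> bool" where
  "monad_sets R eta bind \<longleftrightarrow>
     (\<forall>X. \<forall>x\<in>X. eta X x \<in> R X) \<and>
     (\<forall>X Y f. (\<forall>x\<in>X. f x \<in> R Y) \<longrightarrow> (\<forall>t\<in>R X. bind X Y f t \<in> R Y)) \<and>
     (\<forall>X Y f g. (\<forall>x\<in>X. f x = g x) \<longrightarrow> (\<forall>t\<in>R X. bind X Y f t = bind X Y g t)) \<and>
     (\<forall>X. \<forall>t\<in>R X. bind X X (eta X) t = t) \<and>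
     (\<forall>X Y f. (\<forall>x\<in>X. f x \<in> R Y) \<longrightarrow> (\<forall>x\<in>X. bind X Y f (eta X x) = f x)) \<and>
     (\<forall>X Y Z f g. (\<forall>x\<in>X. f x \<in> R Y) \<longrightarrow> (\<forall>y\<in>Y. g y \<in> R Z) \<longrightarrow>
        (\<forall>t\<in>R X. bind X Z (\<lambda>x. bind Y Z g (f x)) t = bind Y Z g (bind X Y f t)))"

definition left_module_sets ::
  "(nat set \<Rightarrow> 'r set) \<Rightarrow> (nat set \<Rightarrow> nat \<Rightarrow> 'r) \<Rightarrow>
   (nat set \<Rightarrow> nat set \<Rightarrow> (nat \<Rightarrow> 'r) \<Rightarrow> 'r \<Rightarrow> 'r) \<Rightarrow>
   (nat set \<Rightarrow> 'm set) \<Rightarrow> (nat set \<Rightarrow> nat set \<Rightarrow> (nat \<Rightarrow> nat) \<Rightarrow> 'm \<Rightarrow> 'm) \<Rightarrow>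
   (nat set \<Rightarrow> nat set \<Rightarrow> (nat \<Rightarrow> 'r) \<Rightarrow> 'm \<Rightarrow> 'm) \<Rightarrow> bool" where
  "left_module_sets R eta bind LM lmap rho \<longleftrightarrow>
     \<comment> \<open>LM is a functor Sets \<rightarrow> Sets\<close>
     (\<forall>X Y f. (\<forall>x\<in>X. f x \<in> Y) \<longrightarrow> (\<forall>a\<in>LM X. lmap X Y f a \<in> LM Y)) \<and>
     (\<forall>X Y f g. (\<forall>x\<in>X. f x = g x) \<longrightarrow> (\<forall>a\<in>LM X. lmap X Y f a = lmap X Y g a)) \<and>
     (\<forall>X. \<forall>a\<in>LM X. lmap X X id a = a) \<and>
     (\<forall>X Y Z f g. (\<forall>x\<in>X. f x \<in> Y) \<longrightarrow> (\<forall>y\<in>Y. g y \<in> Z) \<longrightarrow>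
        (\<forall>a\<in>LM X. lmap Y Z g (lmap X Y f a) = lmap X Z (g \<circ> f) a)) \<and>
     \<comment> \<open>module structure\<close>
     (\<forall>X Y f. (\<forall>x\<in>X. f x \<in> R Y) \<longrightarrow> (\<forall>a\<in>LM X. rho X Y f a \<in> LM Y)) \<and>
     (\<forall>X Y f g. (\<forall>x\<in>X. f x = g x) \<longrightarrow> (\<forall>a\<in>LM X. rho X Y f a = rho X Y g a)) \<and>
     (\<forall>X. \<forall>a\<in>LM X. rho X X (eta X) a = a) \<and>
     (\<forall>X Y Z f g. (\<forall>x\<in>X. f x \<in> R Y) \<longrightarrow> (\<forall>y\<in>Y. g y \<in> R Z) \<longrightarrow>
        (\<forall>a\<in>LM X. rho Y Z g (rho X Y f a) = rho X Z (\<lambda>x. bind Y Z g (f x)) a))"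

definition is_category ::
  "'o set \<Rightarrow> ('o \<Rightarrow> 'o \<Rightarrow> 'h set) \<Rightarrow> ('h \<Rightarrow> 'h \<Rightarrow> 'h) \<Rightarrow> ('o \<Rightarrow> 'h) \<Rightarrow> bool" where
  "is_category Ob Hom cmp idt \<longleftrightarrow>
     (\<forall>X\<in>Ob. \<forall>Y\<in>Ob. \<forall>X'\<in>Ob. \<forall>Y'\<in>Ob. Hom X Y \<inter> Hom X' Y' \<noteq> {} \<longrightarrow> X = X' \<and> Y = Y') \<and>
     (\<forall>X\<in>Ob. idt X \<in> Hom X X) \<and>
     (\<forall>X\<in>Ob. \<forall>Y\<in>Ob. \<forall>Z\<in>Ob. \<forall>f\<in>Hom X Y. \<forall>g\<in>Hom Y Z. cmp g f \<in> Hom X Z) \<and>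
     (\<forall>X\<in>Ob. \<forall>Y\<in>Ob. \<forall>f\<in>Hom X Y. cmp f (idt X) = f \<and> cmp (idt Y) f = f) \<and>
     (\<forall>W\<in>Ob. \<forall>X\<in>Ob. \<forall>Y\<in>Ob. \<forall>Z\<in>Ob. \<forall>f\<in>Hom W X. \<forall>g\<in>Hom X Y. \<forall>h\<in>Hom Y Z.
        cmp h (cmp g f) = cmp (cmp h g) f)"

definition is_pullback ::
  "'o set \<Rightarrow> ('o \<Rightarrow> 'o \<Rightarrow> 'h set) \<Rightarrow> ('h \<Rightarrow> 'h \<Rightarrow> 'h) \<Rightarrow>
   'o \<Rightarrow> 'o \<Rightarrow> 'o \<Rightarrow> 'o \<Rightarrow> 'h \<Rightarrow> 'h \<Rightarrow> 'h \<Rightarrow> 'h \<Rightarrow> bool" where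
  \<comment> \<open>the commutative square  P --a--> X, P --b--> Y, X --c--> B, Y --d--> B  (c \<circ> a = d \<circ> b)
      is a pullback square\<close>
  "is_pullback Ob Hom cmp P X Y B a b c d \<longleftrightarrow>
     (\<forall>W\<in>Ob. \<forall>u\<in>Hom W Y. \<forall>v\<in>Hom W X. cmp d u = cmp c v \<longrightarrow>
        (\<exists>!w. w \<in> Hom W P \<and> cmp b w = u \<and> cmp a w = v))"

definition C_system ::
  "'o set \<Rightarrow> ('o \<Rightarrow> 'o \<Rightarrow> 'h set) \<Rightarrow> ('h \<Rightarrow> 'h \<Rightarrow> 'h) \<Rightarrow> ('o \<Rightarrow> 'h) \<Rightarrow>
   ('o \<Rightarrow> nat) \<Rightarrow> 'o \<Rightarrow> ('o \<Rightarrow> 'o) \<Rightarrow> ('o \<Rightarrow> 'h) \<Rightarrow>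
   ('h \<Rightarrow> 'o \<Rightarrow> 'o) \<Rightarrow> ('h \<Rightarrow> 'o \<Rightarrow> 'h) \<Rightarrow> bool" where
  "C_system Ob Hom cmp idt l pt ft p fstar q \<longleftrightarrow>
     is_category Ob Hom cmp idt \<and>
     pt \<in> Ob \<and>
     (\<forall>X\<in>Ob. l X = 0 \<longleftrightarrow> X = pt) \<and>
     (\<forall>X\<in>Ob. ft X \<in> Ob) \<and>
     (\<forall>X\<in>Ob. 0 < l X \<longrightarrow> l (ft X) = l X - 1) \<and>
     ft pt = pt \<and>
     (\<forall>X\<in>Ob. \<exists>!f. f \<in> Hom X pt) \<and>
     (\<forall>X\<in>Ob. p X \<in> Hom X (ft X)) \<and>
     (\<forall>X\<in>Ob. \<forall>Y\<in>Ob. \<forall>f\<in>Hom Y (ft X). 0 < l X \<longrightarrow>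
        fstar f X \<in> Ob \<and> 0 < l (fstar f X) \<and> ft (fstar f X) = Y \<and>
        q f X \<in> Hom (fstar f X) X \<and>
        cmp (p X) (q f X) = cmp f (p (fstar f X)) \<and>
        is_pullback Ob Hom cmp (fstar f X) X Y (ft X) (q f X) (p (fstar f X)) (p X) f) \<and>
     (\<forall>X\<in>Ob. 0 < l X \<longrightarrow> fstar (idt (ft X)) X = X \<and> q (idt (ft X)) X = idt X) \<and>
     (\<forall>X\<in>Ob. \<forall>Y\<in>Ob. \<forall>Z\<in>Ob. \<forall>f\<in>Hom Y (ft X). \<forall>g\<in>Hom Z Y. 0 < l X \<longrightarrow>
        fstar (cmp f g) X = fstar g (fstar f X) \<and>
        q (cmp f g) X = cmp (q f X) (q g (fstar f X)))"

text \<open>Objects are lists [T_1,...,T_n] with T_i \<in> LM [i-1] (0-based: xs!i \<in> LM [i]).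
  A morphism (E_1..E_m) \<rightarrow> (T_1..T_n) is a triple (source, target, [f_1..f_n]) with
  f_j \<in> R [m]; carrying source and target makes hom-sets disjoint.\<close>

abbreviation ordn :: "nat \<Rightarrow> nat set" where "ordn n \<equiv> {1..n}"

definition CC_Ob :: "(nat set \<Rightarrow> 'm set) \<Rightarrow> 'm list set" where
  "CC_Ob LM = {xs. \<forall>i<length xs. xs ! i \<in> LM (ordn i)}"

definition CC_Hom :: "(nat set \<Rightarrow> 'r set) \<Rightarrow> (nat set \<Rightarrow> 'm set) \<Rightarrow>
    'm list \<Rightarrow> 'm list \<Rightarrow> ('m list \<times> 'm list \<times> 'r list) set" where
  "CC_Hom R LM X Y = (if X \<in> CC_Ob LM \<and> Y \<in> CC_Ob LM then
     {(X, Y, fs) | fs. length fs = length Y \<and> (\<forall>f\<in>set fs. f \<in> R (ordn (length X)))} else {})"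

definition subst_fun :: "'r list \<Rightarrow> nat \<Rightarrow> 'r" where
  "subst_fun fs i = fs ! (i - 1)"

definition CC_comp :: "(nat set \<Rightarrow> nat set \<Rightarrow> (nat \<Rightarrow> 'r) \<Rightarrow> 'r \<Rightarrow> 'r) \<Rightarrow>
    ('m list \<times> 'm list \<times> 'r list) \<Rightarrow> ('m list \<times> 'm list \<times> 'r list) \<Rightarrow>
    ('m list \<times> 'm list \<times> 'r list)" where
  "CC_comp bind g f = (case f of (X, Y, fs) \<Rightarrow> case g of (_, Z, gs) \<Rightarrow>
     (X, Z, map (bind (ordn (length Y)) (ordn (length X)) (subst_fun fs)) gs))"

definition CC_id :: "(nat set \<Rightarrow> nat \<Rightarrow> 'r) \<Rightarrow> 'm list \<Rightarrow> ('m list \<times> 'm list \<times> 'r list)" where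
  "CC_id eta X = (X, X, map (eta (ordn (length X))) [1..<length X + 1])"

definition CC_ft :: "'m list \<Rightarrow> 'm list" where
  "CC_ft X = butlast X"

definition CC_p :: "(nat set \<Rightarrow> nat \<Rightarrow> 'r) \<Rightarrow> 'm list \<Rightarrow> ('m list \<times> 'm list \<times> 'r list)" where
  "CC_p eta X = (X, butlast X, map (eta (ordn (length X))) [1..<length X])"

text \<open>f^*X = (R_1,...,R_m, T_{n+1}(f_1/1,...,f_n/n))\<close>
definition CC_star :: "(nat set \<Rightarrow> nat set \<Rightarrow> (nat \<Rightarrow> 'r) \<Rightarrow> 'm \<Rightarrow> 'm) \<Rightarrow>
    ('m list \<times> 'm list \<times> 'r list) \<Rightarrow> 'm list \<Rightarrow> 'm list" where
  "CC_star rho f X = (case f of (D, C, fs) \<Rightarrow>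
     D @ [rho (ordn (length C)) (ordn (length D)) (subst_fun fs) (last X)])"

text \<open>q(f,X) = (f_1,...,f_n, m+1) : f^*X \<rightarrow> X, where f_i \<in> R [m] is regarded as an element
  of R [m+1] via R applied to the inclusion [m] \<subseteq> [m+1].\<close>
definition CC_q :: "(nat set \<Rightarrow> nat \<Rightarrow> 'r) \<Rightarrow> (nat set \<Rightarrow> nat set \<Rightarrow> (nat \<Rightarrow> 'r) \<Rightarrow> 'r \<Rightarrow> 'r) \<Rightarrow>
    (nat set \<Rightarrow> nat set \<Rightarrow> (nat \<Rightarrow> 'r) \<Rightarrow> 'm \<Rightarrow> 'm) \<Rightarrow>
    ('m list \<times> 'm list \<times> 'r list) \<Rightarrow> 'm list \<Rightarrow> ('m list \<times> 'm list \<times> 'r list)" where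
  "CC_q eta bind rho f X = (case f of (D, C, fs) \<Rightarrow>
     (CC_star rho f X, X,
      map (bind (ordn (length D)) (ordn (length D + 1)) (eta (ordn (length D + 1)))) fs
        @ [eta (ordn (length D + 1)) (length D + 1)]))"

end

theory Submission
  imports Defs
begin
context
  fixes R :: "nat set \<Rightarrow> 'r set" and eta :: "nat set \<Rightarrow> nat \<Rightarrow> 'r"
    and bind :: "nat set \<Rightarrow> nat set \<Rightarrow> (nat \<Rightarrow> 'r) \<Rightarrow> 'r \<Rightarrow> 'r"
    and LM :: "nat set \<Rightarrow> 'm set" and lmap :: "nat set \<Rightarrow> nat set \<Rightarrow> (nat \<Rightarrow> nat) \<Rightarrow> 'm \<Rightarrow> 'm"
    and rho :: "nat set \<Rightarrow> nat set \<Rightarrow> (nat \<Rightarrow> 'r) \<Rightarrow> 'm \<Rightarrow> 'm"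
  assumes M: "monad_sets R eta bind"
    and L: "left_module_sets R eta bind LM lmap rho"
begin

lemma eta_in: "x \<in> X \<Longrightarrow> eta X x \<in> R X" using M[unfolded monad_sets_def, THEN conjunct1] by blast
lemma bind_in: "(\<And>x. x\<in>X \<Longrightarrow> f x \<in> R Y) \<Longrightarrow> t \<in> R X \<Longrightarrow> bind X Y f t \<in> R Y"
  using M[unfolded monad_sets_def, THEN conjunct2, THEN conjunct1] by blast
lemma bind_cong: "(\<And>x. x\<in>X \<Longrightarrow> f x = g x) \<Longrightarrow> t \<in> R X \<Longrightarrow> bind X Y f t = bind X Y g t"
  using M[unfolded monad_sets_def, THEN conjunct2, THEN conjunct2, THEN conjunct1] by blast
lemma bind_eta: "t \<in> R X \<Longrightarrow> bind X X (eta X) t = t"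
  using M[unfolded monad_sets_def, THEN conjunct2, THEN conjunct2, THEN conjunct2, THEN conjunct1] by blast
lemma bind_eta_left: "(\<And>x. x\<in>X \<Longrightarrow> f x \<in> R Y) \<Longrightarrow> x \<in> X \<Longrightarrow> bind X Y f (eta X x) = f x"
  using M[unfolded monad_sets_def, THEN conjunct2, THEN conjunct2, THEN conjunct2, THEN conjunct2, THEN conjunct1] by blast
lemma bind_assoc: "(\<And>x. x\<in>X \<Longrightarrow> f x \<in> R Y) \<Longrightarrow> (\<And>y. y\<in>Y \<Longrightarrow> g y \<in> R Z) \<Longrightarrow> t \<in> R X \<Longrightarrow>
   bind Y Z g (bind X Y f t) = bind X Z (\<lambda>x. bind Y Z g (f x)) t"
  by (rule M[unfolded monad_sets_def, THEN conjunct2, THEN conjunct2, THEN conjunct2, THEN conjunct2, THEN conjunct2, rule_format, symmetric]) auto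
lemma rho_in: "(\<And>x. x\<in>X \<Longrightarrow> f x \<in> R Y) \<Longrightarrow> a \<in> LM X \<Longrightarrow> rho X Y f a \<in> LM Y"
  using L[unfolded left_module_sets_def, THEN conjunct2, THEN conjunct2, THEN conjunct2, THEN conjunct2, THEN conjunct1] by blast
lemma rho_cong: "(\<And>x. x\<in>X \<Longrightarrow> f x = g x) \<Longrightarrow> a \<in> LM X \<Longrightarrow> rho X Y f a = rho X Y g a"
  using L[unfolded left_module_sets_def, THEN conjunct2, THEN conjunct2, THEN conjunct2, THEN conjunct2, THEN conjunct2, THEN conjunct1] by blast
lemma rho_eta: "a \<in> LM X \<Longrightarrow> rho X X (eta X) a = a"
  using L[unfolded left_module_sets_def, THEN conjunct2, THEN conjunct2, THEN conjunct2, THEN conjunct2, THEN conjunct2, THEN conjunct2, THEN conjunct1] by blast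
lemma rho_comp: "(\<And>x. x\<in>X \<Longrightarrow> f x \<in> R Y) \<Longrightarrow> (\<And>y. y\<in>Y \<Longrightarrow> g y \<in> R Z) \<Longrightarrow> a \<in> LM X \<Longrightarrow>
   rho Y Z g (rho X Y f a) = rho X Z (\<lambda>x. bind Y Z g (f x)) a"
  by (rule L[unfolded left_module_sets_def, THEN conjunct2, THEN conjunct2, THEN conjunct2, THEN conjunct2, THEN conjunct2, THEN conjunct2, THEN conjunct2, rule_format]) auto

lemma subst_in: "(\<forall>f\<in>set fs. f \<in> A) \<Longrightarrow> i \<in> {1..length fs} \<Longrightarrow> subst_fun fs i \<in> A"
  unfolding subst_fun_def by (auto)

lemma subst_map: "i \<in> {1..length fs} \<Longrightarrow> subst_fun (map F fs) i = F (subst_fun fs i)"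
  unfolding subst_fun_def by auto

lemma hom_iff: "h \<in> CC_Hom R LM X Y \<longleftrightarrow> X \<in> CC_Ob LM \<and> Y \<in> CC_Ob LM \<and>
   (\<exists>fs. h = (X,Y,fs) \<and> length fs = length Y \<and> (\<forall>f\<in>set fs. f \<in> R {1..length X}))"
  unfolding CC_Hom_def by auto

lemma comp_eq: "CC_comp bind (Y,Z,gs) (X,Y',fs) = (X,Z, map (bind {1..length Y'} {1..length X} (subst_fun fs)) gs)"
  by (simp add: CC_comp_def)

lemma id_in: "X \<in> CC_Ob LM \<Longrightarrow> CC_id eta X \<in> CC_Hom R LM X X"
  unfolding hom_iff CC_id_def by (auto intro: eta_in simp del: upt_Suc)

lemma comp_in: assumes f: "f \<in> CC_Hom R LM X Y" and g: "g \<in> CC_Hom R LM Y Z"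
  shows "CC_comp bind g f \<in> CC_Hom R LM X Z"
proof -
  obtain fs where f': "f = (X,Y,fs)" "length fs = length Y" "\<forall>a\<in>set fs. a \<in> R {1..length X}"
    and XY: "X \<in> CC_Ob LM" "Y \<in> CC_Ob LM" using f unfolding hom_iff by blast
  obtain gs where g': "g = (Y,Z,gs)" "length gs = length Z" "\<forall>a\<in>set gs. a \<in> R {1..length Y}"
    and Z: "Z \<in> CC_Ob LM" using g unfolding hom_iff by blast
  have "\<forall>a\<in>set gs. bind {1..length Y} {1..length X} (subst_fun fs) a \<in> R {1..length X}"
    using g'(3) f'(2,3) by (auto intro!: bind_in subst_in)
  then show ?thesis unfolding f' g' comp_eq hom_iff using XY Z g'(2) by auto
qed

lemma comp_id_right: assumes f: "f \<in> CC_Hom R LM X Y"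
  shows "CC_comp bind f (CC_id eta X) = f"
proof -
  obtain fs where f': "f = (X,Y,fs)" "length fs = length Y" "\<forall>a\<in>set fs. a \<in> R {1..length X}"
    using f unfolding hom_iff by blast
  have "bind {1..length X} {1..length X} (subst_fun (map (eta {1..length X}) [1..<length X + 1])) a = a"
    if "a \<in> set fs" for a
  proof -
    have "bind {1..length X} {1..length X} (subst_fun (map (eta {1..length X}) [1..<length X + 1])) a
       = bind {1..length X} {1..length X} (eta {1..length X}) a"
      by (rule bind_cong) (use that f' in \<open>auto simp: subst_fun_def simp del: upt_Suc\<close>)
    also have "... = a" using that f' by (auto intro: bind_eta)
    finally show ?thesis .
  qed
  then show ?thesis unfolding f' CC_id_def comp_eq by (simp add: map_idI)
qed

lemma comp_id_left: assumes f: "f \<in> CC_Hom R LM X Y"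
  shows "CC_comp bind (CC_id eta Y) f = f"
proof -
  obtain fs where f': "f = (X,Y,fs)" "length fs = length Y" "\<forall>a\<in>set fs. a \<in> R {1..length X}"
    using f unfolding hom_iff by blast
  have "map (bind {1..length Y} {1..length X} (subst_fun fs)) (map (eta {1..length Y}) [1..<length Y + 1]) = fs"
  proof (rule nth_equalityI)
    fix i assume "i < length (map (bind {1..length Y} {1..length X} (subst_fun fs)) (map (eta {1..length Y}) [1..<length Y + 1]))"
    then have i: "i < length Y" by (simp del: upt_Suc)
    have "bind {1..length Y} {1..length X} (subst_fun fs) (eta {1..length Y} (Suc i)) = subst_fun fs (Suc i)"
      by (rule bind_eta_left) (use i f' in \<open>auto intro!: subst_in\<close>)
    then show "map (bind {1..length Y} {1..length X} (subst_fun fs)) (map (eta {1..length Y}) [1..<length Y + 1]) ! i = fs ! i"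
      using i by (simp add: subst_fun_def del: upt_Suc)
  qed (simp add: f' del: upt_Suc)
  then show ?thesis unfolding f' CC_id_def comp_eq by simp
qed

lemma comp_assoc: assumes f: "f \<in> CC_Hom R LM W X" and g: "g \<in> CC_Hom R LM X Y" and h: "h \<in> CC_Hom R LM Y Z"
  shows "CC_comp bind h (CC_comp bind g f) = CC_comp bind (CC_comp bind h g) f"
proof -
  obtain fs where f': "f = (W,X,fs)" "length fs = length X" "\<forall>a\<in>set fs. a \<in> R {1..length W}"
    using f unfolding hom_iff by blast
  obtain gs where g': "g = (X,Y,gs)" "length gs = length Y" "\<forall>a\<in>set gs. a \<in> R {1..length X}"
    using g unfolding hom_iff by blast
  obtain hs where h': "h = (Y,Z,hs)" "length hs = length Z" "\<forall>a\<in>set hs. a \<in> R {1..length Y}"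
    using h unfolding hom_iff by blast
  have "bind {1..length Y} {1..length W} (subst_fun (map (bind {1..length X} {1..length W} (subst_fun fs)) gs)) a
     = bind {1..length X} {1..length W} (subst_fun fs) (bind {1..length Y} {1..length X} (subst_fun gs) a)"
    if a: "a \<in> set hs" for a
  proof -
    have "bind {1..length X} {1..length W} (subst_fun fs) (bind {1..length Y} {1..length X} (subst_fun gs) a)
      = bind {1..length Y} {1..length W} (\<lambda>y. bind {1..length X} {1..length W} (subst_fun fs) (subst_fun gs y)) a"
      by (rule bind_assoc) (use a f' g' h' in \<open>auto intro!: subst_in\<close>)
    also have "... = bind {1..length Y} {1..length W} (subst_fun (map (bind {1..length X} {1..length W} (subst_fun fs)) gs)) a"
      by (rule bind_cong) (use a g' h' in \<open>auto simp: subst_map\<close>)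
    finally show ?thesis by simp
  qed
  then show ?thesis unfolding f' g' h' comp_eq by simp
qed

lemma hom_disj: "CC_Hom R LM X Y \<inter> CC_Hom R LM X' Y' \<noteq> {} \<Longrightarrow> X = X' \<and> Y = Y'"
proof -
  assume "CC_Hom R LM X Y \<inter> CC_Hom R LM X' Y' \<noteq> {}"
  then obtain h where "h \<in> CC_Hom R LM X Y" "h \<in> CC_Hom R LM X' Y'" by blast
  then show "X = X' \<and> Y = Y'" unfolding hom_iff by auto
qed

lemma is_cat: "is_category (CC_Ob LM) (CC_Hom R LM) (CC_comp bind) (CC_id eta)"
  unfolding is_category_def
  apply (intro conjI ballI impI)
  using hom_disj apply blast
  using hom_disj apply blast
  by (auto intro: id_in comp_in comp_id_left comp_id_right comp_assoc)

lemma subst_etas: "x \<in> {1..<N} \<Longrightarrow> subst_fun (map g [1..<N]) x = g x"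
  unfolding subst_fun_def by (auto simp del: upt_Suc)

lemma subst_etas': "Suc 0 \<le> x \<Longrightarrow> x < N \<Longrightarrow> subst_fun (map g [Suc 0..<N]) x = g x"
  unfolding subst_fun_def by (auto simp del: upt_Suc)

lemma p_eq: "CC_p eta Z = (Z, butlast Z, map (eta {1..length Z}) [1..<length Z])"
  by (simp add: CC_p_def)

lemma comp_p: assumes w: "(W,Z,ws) \<in> CC_Hom R LM W Z"
  shows "CC_comp bind (CC_p eta Z) (W,Z,ws) = (W, butlast Z, butlast ws)"
proof -
  from w have ws: "length ws = length Z" "\<forall>a\<in>set ws. a \<in> R {1..length W}" unfolding hom_iff by auto
  have "map (bind {1..length Z} {1..length W} (subst_fun ws)) (map (eta {1..length Z}) [1..<length Z]) = butlast ws"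
  proof (rule nth_equalityI)
    fix i assume "i < length (map (bind {1..length Z} {1..length W} (subst_fun ws)) (map (eta {1..length Z}) [1..<length Z]))"
    then have i: "i < length Z - 1" by simp
    have "bind {1..length Z} {1..length W} (subst_fun ws) (eta {1..length Z} (Suc i)) = subst_fun ws (Suc i)"
      by (rule bind_eta_left) (use i ws in \<open>auto intro!: subst_in\<close>)
    then show "map (bind {1..length Z} {1..length W} (subst_fun ws)) (map (eta {1..length Z}) [1..<length Z]) ! i = butlast ws ! i"
      using i ws by (simp add: subst_fun_def nth_butlast)
  qed (simp add: ws)
  then show ?thesis unfolding p_eq comp_eq by simp
qed

lemma q_eq: "CC_q eta bind rho (Y,C,fs) X = (CC_star rho (Y,C,fs) X, X,
      map (bind {1..length Y} {1..length Y + 1} (eta {1..length Y + 1})) fs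
        @ [eta {1..length Y + 1} (length Y + 1)])"
  by (simp add: CC_q_def)

lemma star_eq: "CC_star rho (Y,C,fs) X = Y @ [rho {1..length C} {1..length Y} (subst_fun fs) (last X)]"
  by (simp add: CC_star_def)

lemma comp_q: assumes f: "(Y,C,fs) \<in> CC_Hom R LM Y C"
  and w: "(W,Z,ws) \<in> CC_Hom R LM W Z" and Z: "Z = CC_star rho (Y,C,fs) X"
  shows "CC_comp bind (CC_q eta bind rho (Y,C,fs) X) (W,Z,ws)
     = (W, X, map (bind {1..length Y} {1..length W} (subst_fun (butlast ws))) fs @ [last ws])"
proof -
  from f have fs: "length fs = length C" "\<forall>a\<in>set fs. a \<in> R {1..length Y}" unfolding hom_iff by auto
  from w have ws: "length ws = length Z" "\<forall>a\<in>set ws. a \<in> R {1..length W}" unfolding hom_iff by auto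
  have lZ: "length Z = Suc (length Y)" using Z by (simp add: star_eq)
  have Sws: "subst_fun ws x \<in> R {1..length W}" if "x \<in> {1..Suc (length Y)}" for x
    using that ws lZ by (auto intro!: subst_in)
  have last: "bind {1..Suc (length Y)} {1..length W} (subst_fun ws) (eta {1..Suc (length Y)} (Suc (length Y))) = last ws"
  proof -
    have "bind {1..Suc (length Y)} {1..length W} (subst_fun ws) (eta {1..Suc (length Y)} (Suc (length Y))) = subst_fun ws (Suc (length Y))"
      by (rule bind_eta_left) (use Sws in auto)
    also have "... = last ws" using ws lZ by (subst last_conv_nth) (auto simp: subst_fun_def)
    finally show ?thesis .
  qed
  have mid: "bind {1..Suc (length Y)} {1..length W} (subst_fun ws) (bind {1..length Y} {1..Suc (length Y)} (eta {1..Suc (length Y)}) a)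
     = bind {1..length Y} {1..length W} (subst_fun (butlast ws)) a" if a: "a \<in> set fs" for a
  proof -
    have "bind {1..Suc (length Y)} {1..length W} (subst_fun ws) (bind {1..length Y} {1..Suc (length Y)} (eta {1..Suc (length Y)}) a)
      = bind {1..length Y} {1..length W} (\<lambda>x. bind {1..Suc (length Y)} {1..length W} (subst_fun ws) (eta {1..Suc (length Y)} x)) a"
      by (rule bind_assoc) (use a fs Sws in \<open>auto intro: eta_in\<close>)
    also have "... = bind {1..length Y} {1..length W} (subst_fun (butlast ws)) a"
    proof (rule bind_cong)
      fix x assume x: "x \<in> {1..length Y}"
      have "bind {1..Suc (length Y)} {1..length W} (subst_fun ws) (eta {1..Suc (length Y)} x) = subst_fun ws x"
        by (rule bind_eta_left) (use x Sws in auto)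
      also have "... = subst_fun (butlast ws) x" using x ws lZ by (auto simp: subst_fun_def nth_butlast)
      finally show "bind {1..Suc (length Y)} {1..length W} (subst_fun ws) (eta {1..Suc (length Y)} x) = subst_fun (butlast ws) x" .
    qed (use a fs in auto)
    finally show ?thesis .
  qed
  show ?thesis unfolding q_eq comp_eq using mid last lZ Z[symmetric] by simp
qed

lemma ob_snoc: "Y \<in> CC_Ob LM \<Longrightarrow> r \<in> LM {1..length Y} \<Longrightarrow> Y @ [r] \<in> CC_Ob LM"
  unfolding CC_Ob_def by (auto simp: nth_append less_Suc_eq)

lemma ob_butlast: "X \<in> CC_Ob LM \<Longrightarrow> butlast X \<in> CC_Ob LM"
  unfolding CC_Ob_def by (auto simp: nth_butlast)

lemma ob_last: "X \<in> CC_Ob LM \<Longrightarrow> 0 < length X \<Longrightarrow> last X \<in> LM {1..length (butlast X)}"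
  unfolding CC_Ob_def by (auto simp: last_conv_nth)

lemma star_ob: assumes X: "X \<in> CC_Ob LM" and Y: "Y \<in> CC_Ob LM" and f: "f \<in> CC_Hom R LM Y (CC_ft X)"
  and l: "0 < length X"
  shows "CC_star rho f X \<in> CC_Ob LM" "length (CC_star rho f X) = Suc (length Y)"
    "CC_ft (CC_star rho f X) = Y"
proof -
  obtain fs where f': "f = (Y, butlast X, fs)" "length fs = length (butlast X)" "\<forall>a\<in>set fs. a \<in> R {1..length Y}"
    using f unfolding hom_iff CC_ft_def by blast
  have "rho {1..length (butlast X)} {1..length Y} (subst_fun fs) (last X) \<in> LM {1..length Y}"
    by (rule rho_in) (use f' ob_last[OF X l] in \<open>auto intro!: subst_in\<close>)
  then show "CC_star rho f X \<in> CC_Ob LM" unfolding f' star_eq using Y by (rule_tac ob_snoc) auto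
  show "length (CC_star rho f X) = Suc (length Y)" "CC_ft (CC_star rho f X) = Y"
    unfolding f' star_eq CC_ft_def by auto
qed

lemma q_props: assumes X: "X \<in> CC_Ob LM" and Y: "Y \<in> CC_Ob LM" and f: "f \<in> CC_Hom R LM Y (CC_ft X)"
  and l: "0 < length X"
  shows "CC_q eta bind rho f X \<in> CC_Hom R LM (CC_star rho f X) X"
    "CC_comp bind (CC_p eta X) (CC_q eta bind rho f X) = CC_comp bind f (CC_p eta (CC_star rho f X))"
proof -
  obtain fs where f': "f = (Y, butlast X, fs)" "length fs = length (butlast X)" "\<forall>a\<in>set fs. a \<in> R {1..length Y}"
    using f unfolding hom_iff CC_ft_def by blast
  note so = star_ob[OF X Y f l]
  have incl_in: "bind {1..length Y} {1..length Y + 1} (eta {1..length Y + 1}) a \<in> R {1..length Y + 1}"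
    if "a \<in> set fs" for a
    by (rule bind_in) (use that f' in \<open>auto intro: eta_in\<close>)
  show qh: "CC_q eta bind rho f X \<in> CC_Hom R LM (CC_star rho f X) X"
    unfolding f' q_eq hom_iff using so X f' l incl_in by (auto intro: eta_in)
  have "CC_comp bind (CC_p eta X) (CC_q eta bind rho f X) = (CC_star rho f X, butlast X,
      map (bind {1..length Y} {1..length Y + 1} (eta {1..length Y + 1})) fs)"
    using qh unfolding f' q_eq by (subst comp_p) auto
  also have "... = CC_comp bind f (CC_p eta (CC_star rho f X))"
  proof -
    have "bind {1..length Y} {1..Suc (length Y)} (subst_fun (map (eta {1..Suc (length Y)}) [1..<Suc (length Y)])) a
       = bind {1..length Y} {1..Suc (length Y)} (eta {1..Suc (length Y)}) a" if "a \<in> set fs" for a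
      by (rule bind_cong) (use that f' in \<open>auto simp: subst_etas subst_etas' simp del: upt_Suc\<close>)
    then show ?thesis using so unfolding p_eq f' comp_eq by (simp del: upt_Suc)
  qed
  finally show "CC_comp bind (CC_p eta X) (CC_q eta bind rho f X) = CC_comp bind f (CC_p eta (CC_star rho f X))" .
qed

lemma pullback: assumes X: "X \<in> CC_Ob LM" and Y: "Y \<in> CC_Ob LM" and f: "f \<in> CC_Hom R LM Y (CC_ft X)"
  and l: "0 < length X"
  shows "is_pullback (CC_Ob LM) (CC_Hom R LM) (CC_comp bind) (CC_star rho f X) X Y (CC_ft X)
          (CC_q eta bind rho f X) (CC_p eta (CC_star rho f X)) (CC_p eta X) f"
  unfolding is_pullback_def
proof (intro ballI impI)
  fix W u v assume W: "W \<in> CC_Ob LM" and u: "u \<in> CC_Hom R LM W Y" and v: "v \<in> CC_Hom R LM W X"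
    and eq: "CC_comp bind f u = CC_comp bind (CC_p eta X) v"
  obtain fs where f': "f = (Y, butlast X, fs)" "length fs = length (butlast X)" "\<forall>a\<in>set fs. a \<in> R {1..length Y}"
    using f unfolding hom_iff CC_ft_def by blast
  obtain us where u': "u = (W, Y, us)" "length us = length Y" "\<forall>a\<in>set us. a \<in> R {1..length W}"
    using u unfolding hom_iff by blast
  obtain vs where v': "v = (W, X, vs)" "length vs = length X" "\<forall>a\<in>set vs. a \<in> R {1..length W}"
    using v unfolding hom_iff by blast
  note so = star_ob[OF X Y f l]
  have fh: "(Y, butlast X, fs) \<in> CC_Hom R LM Y (butlast X)" using f f' by (simp add: CC_ft_def)
  have vne: "vs \<noteq> []" using v' l by auto
  have eq2: "map (bind {1..length Y} {1..length W} (subst_fun us)) fs = butlast vs"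
    using eq unfolding f' u' v' comp_eq using comp_p[of W X vs] v v' by simp
  let ?w = "(W, CC_star rho f X, us @ [last vs])"
  have wh: "?w \<in> CC_Hom R LM W (CC_star rho f X)"
    using so W u' v' vne unfolding hom_iff by auto
  have pw: "CC_comp bind (CC_p eta (CC_star rho f X)) w = (W, butlast (CC_star rho f X), butlast ws)"
    if "w = (W, CC_star rho f X, ws)" "w \<in> CC_Hom R LM W (CC_star rho f X)" for w ws
    using comp_p that by blast
  have qw: "CC_comp bind (CC_q eta bind rho f X) w
     = (W, X, map (bind {1..length Y} {1..length W} (subst_fun (butlast ws))) fs @ [last ws])"
    if "w = (W, CC_star rho f X, ws)" "w \<in> CC_Hom R LM W (CC_star rho f X)" for w ws
    using comp_q[OF fh, of W "CC_star rho f X" ws X] that unfolding f' by simp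
  show "\<exists>!w. w \<in> CC_Hom R LM W (CC_star rho f X) \<and> CC_comp bind (CC_p eta (CC_star rho f X)) w = u
          \<and> CC_comp bind (CC_q eta bind rho f X) w = v"
  proof (rule ex1I[of _ ?w])
    show "?w \<in> CC_Hom R LM W (CC_star rho f X) \<and> CC_comp bind (CC_p eta (CC_star rho f X)) ?w = u
          \<and> CC_comp bind (CC_q eta bind rho f X) ?w = v"
      using wh pw[OF refl wh] qw[OF refl wh] so(3) eq2 vne u' v' by (simp add: CC_ft_def)
  next
    fix w assume w: "w \<in> CC_Hom R LM W (CC_star rho f X) \<and> CC_comp bind (CC_p eta (CC_star rho f X)) w = u
          \<and> CC_comp bind (CC_q eta bind rho f X) w = v"
    then obtain ws where ws: "w = (W, CC_star rho f X, ws)" "length ws = Suc (length Y)"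
      unfolding hom_iff using so by auto
    have "butlast ws = us" using w pw[OF ws(1)] u' so(3) by (simp add: CC_ft_def)
    moreover have "last ws = last vs" using w qw[OF ws(1)] v' by auto
    moreover have "ws \<noteq> []" using ws by auto
    ultimately show "w = ?w" using ws(1) by (metis append_butlast_last_id)
  qed
qed

lemma id_axiom: assumes X: "X \<in> CC_Ob LM" and l: "0 < length X"
  shows "CC_star rho (CC_id eta (CC_ft X)) X = X \<and> CC_q eta bind rho (CC_id eta (CC_ft X)) X = CC_id eta X"
proof -
  obtain n where n: "length X = Suc n" using l by (cases "length X") auto
  have bn: "length (butlast X) = n" using n by simp
  have r: "rho {1..n} {1..n} (subst_fun (map (eta {1..n}) [1..<n + 1])) (last X) = last X"
  proof -
    have "rho {1..n} {1..n} (subst_fun (map (eta {1..n}) [1..<n + 1])) (last X) = rho {1..n} {1..n} (eta {1..n}) (last X)"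
      by (rule rho_cong) (use ob_last[OF X l] bn in \<open>auto simp: subst_etas subst_etas' simp del: upt_Suc\<close>)
    also have "... = last X" by (rule rho_eta) (use ob_last[OF X l] bn in auto)
    finally show ?thesis .
  qed
  have st: "CC_star rho (CC_id eta (CC_ft X)) X = X"
    unfolding CC_id_def CC_ft_def star_eq bn using r l by (simp del: upt_Suc)
  have m: "map (bind {1..n} {1..n + 1} (eta {1..n + 1})) (map (eta {1..n}) [1..<n + 1])
      = map (eta {1..n+1}) [1..<n + 1]"
    unfolding map_map by (rule map_cong) (auto intro!: bind_eta_left eta_in simp del: upt_Suc)
  have q: "CC_q eta bind rho (CC_id eta (CC_ft X)) X = CC_id eta X"
  proof -
    have st': "CC_star rho (butlast X, butlast X, map (eta {1..n}) [1..<n + 1]) X = X"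
      using st unfolding CC_id_def CC_ft_def bn .
    show ?thesis unfolding CC_id_def CC_ft_def q_eq bn st' m using n by simp
  qed
  show ?thesis using st q by simp
qed
lemma comp_axiom: assumes X: "X \<in> CC_Ob LM" and Y: "Y \<in> CC_Ob LM" and Z: "Z \<in> CC_Ob LM"
  and f: "f \<in> CC_Hom R LM Y (CC_ft X)" and g: "g \<in> CC_Hom R LM Z Y" and l: "0 < length X"
  shows "CC_star rho (CC_comp bind f g) X = CC_star rho g (CC_star rho f X) \<and>
         CC_q eta bind rho (CC_comp bind f g) X = CC_comp bind (CC_q eta bind rho f X) (CC_q eta bind rho g (CC_star rho f X))"
proof -
  obtain fs where f': "f = (Y, butlast X, fs)" "length fs = length (butlast X)" "\<forall>a\<in>set fs. a \<in> R {1..length Y}"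
    using f unfolding hom_iff CC_ft_def by blast
  obtain gs where g': "g = (Z, Y, gs)" "length gs = length Y" "\<forall>a\<in>set gs. a \<in> R {1..length Z}"
    using g unfolding hom_iff by blast
  note so = star_ob[OF X Y f l]
  have g2: "g \<in> CC_Hom R LM Z (CC_ft (CC_star rho f X))" using g so by simp
  have l2: "0 < length (CC_star rho f X)" using so(2) by simp
  note so2 = star_ob[OF so(1) Z g2 l2]
  note qp2 = q_props[OF so(1) Z g2 l2]
  let ?G = "bind {1..length Y} {1..length Z} (subst_fun gs)"
  let ?I = "bind {1..length Z} {1..Suc (length Z)} (eta {1..Suc (length Z)})"
  have fh: "(Y, butlast X, fs) \<in> CC_Hom R LM Y (butlast X)" using f f' by (simp add: CC_ft_def)
  have Sgs: "subst_fun gs x \<in> R {1..length Z}" if "x \<in> {1..length Y}" for x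
    using that g' by (auto intro!: subst_in)
  have Sfs: "subst_fun fs x \<in> R {1..length Y}" if "x \<in> {1..length (butlast X)}" for x
    using that f' by (auto intro!: subst_in)
  have r: "rho {1..length Y} {1..length Z} (subst_fun gs) (rho {1..length (butlast X)} {1..length Y} (subst_fun fs) (last X))
      = rho {1..length (butlast X)} {1..length Z} (subst_fun (map ?G fs)) (last X)"
  proof -
    have "rho {1..length Y} {1..length Z} (subst_fun gs) (rho {1..length (butlast X)} {1..length Y} (subst_fun fs) (last X))
       = rho {1..length (butlast X)} {1..length Z} (\<lambda>x. ?G (subst_fun fs x)) (last X)"
      by (rule rho_comp) (use Sfs Sgs ob_last[OF X l] in auto)
    also have "... = rho {1..length (butlast X)} {1..length Z} (subst_fun (map ?G fs)) (last X)"
      by (rule rho_cong) (use f' ob_last[OF X l] in \<open>auto simp: subst_map\<close>)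
    finally show ?thesis .
  qed
  have st: "CC_star rho (CC_comp bind f g) X = CC_star rho g (CC_star rho f X)"
    unfolding f' g' comp_eq star_eq using r by simp
  have incl: "?I (?G a) = bind {1..length Y} {1..Suc (length Z)} (subst_fun (map ?I gs)) a"
    if a: "a \<in> set fs" for a
  proof -
    have "?I (?G a) = bind {1..length Y} {1..Suc (length Z)} (\<lambda>x. ?I (subst_fun gs x)) a"
      by (rule bind_assoc) (use a f' Sgs in \<open>auto intro: eta_in\<close>)
    also have "... = bind {1..length Y} {1..Suc (length Z)} (subst_fun (map ?I gs)) a"
      by (rule bind_cong) (use a f' g' in \<open>auto simp: subst_map\<close>)
    finally show ?thesis .
  qed
  have lg: "length (CC_star rho g (CC_star rho f X)) = Suc (length Z)" using so2 by simp
  have q2: "CC_q eta bind rho g (CC_star rho f X) = (CC_star rho g (CC_star rho f X), CC_star rho f X,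
      map ?I gs @ [eta {1..Suc (length Z)} (Suc (length Z))])"
    unfolding g' q_eq by simp
  have "CC_comp bind (CC_q eta bind rho f X) (CC_q eta bind rho g (CC_star rho f X))
     = (CC_star rho g (CC_star rho f X), X,
        map (bind {1..length Y} {1..Suc (length Z)} (subst_fun (map ?I gs))) fs @ [eta {1..Suc (length Z)} (Suc (length Z))])"
    unfolding q2 f'(1) using comp_q[OF fh, of "CC_star rho g (CC_star rho f X)" "CC_star rho f X"
        "map ?I gs @ [eta {1..Suc (length Z)} (Suc (length Z))]" X] qp2(1) q2 lg f'(1)
    by simp
  also have "... = CC_q eta bind rho (CC_comp bind f g) X"
    unfolding f' g' comp_eq q_eq using st incl unfolding f' g' comp_eq by simp
  finally show ?thesis using st by simp
qed

lemma p_hom: "X \<in> CC_Ob LM \<Longrightarrow> CC_p eta X \<in> CC_Hom R LM X (CC_ft X)"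
  unfolding p_eq hom_iff CC_ft_def by (auto intro: ob_butlast eta_in)

lemma term_unique: "X \<in> CC_Ob LM \<Longrightarrow> \<exists>!f. f \<in> CC_Hom R LM X []"
proof (rule ex1I[of _ "(X, [], [])"])
  assume "X \<in> CC_Ob LM" then show "(X, [], []) \<in> CC_Hom R LM X []" unfolding hom_iff CC_Ob_def by auto
next
  fix f assume "f \<in> CC_Hom R LM X []" then show "f = (X, [], [])" unfolding hom_iff by auto
qed

lemma nil_ob: "[] \<in> CC_Ob LM" by (simp add: CC_Ob_def)
lemma ft_ob: "X \<in> CC_Ob LM \<Longrightarrow> CC_ft X \<in> CC_Ob LM" by (simp add: CC_ft_def ob_butlast)
lemma ft_len: "length (CC_ft X) = length X - 1" by (simp add: CC_ft_def)
lemma ft_nil: "CC_ft [] = []" by (simp add: CC_ft_def)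

lemma csys: "C_system (CC_Ob LM) (CC_Hom R LM) (CC_comp bind) (CC_id eta) length []
           CC_ft (CC_p eta) (CC_star rho) (CC_q eta bind rho)"
  unfolding C_system_def
  apply (intro conjI ballI impI is_cat p_hom term_unique)
  by (simp_all add: nil_ob ft_ob ft_len ft_nil star_ob q_props pullback id_axiom comp_axiom)

end

theorem proposition3p1:
  fixes R :: "nat set \<Rightarrow> 'r set" and eta :: "nat set \<Rightarrow> nat \<Rightarrow> 'r"
    and bind :: "nat set \<Rightarrow> nat set \<Rightarrow> (nat \<Rightarrow> 'r) \<Rightarrow> 'r \<Rightarrow> 'r"
    and LM :: "nat set \<Rightarrow> 'm set" and lmap :: "nat set \<Rightarrow> nat set \<Rightarrow> (nat \<Rightarrow> nat) \<Rightarrow> 'm \<Rightarrow> 'm"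
    and rho :: "nat set \<Rightarrow> nat set \<Rightarrow> (nat \<Rightarrow> 'r) \<Rightarrow> 'm \<Rightarrow> 'm"
  assumes "monad_sets R eta bind"
    and "left_module_sets R eta bind LM lmap rho"
  shows "C_system (CC_Ob LM) (CC_Hom R LM) (CC_comp bind) (CC_id eta) length []
           CC_ft (CC_p eta) (CC_star rho) (CC_q eta bind rho)"
  using csys[OF assms] .

end
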